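(* Let $S$ be a nonempty complete lattice and let $F:S\to 2^S$ be a V-ascending correspondence. Suppose that for every $x\in S$, the subset $F(x)$ is nonempty and chain-subcomplete in $S$. Then $\mathrm{Fix}(F)=\{s\in S: s\in F(s)\}$, with the order induced from $S$, is a nonempty complete lattice.
   Context: A poset $S$ is a complete lattice if every nonempty subset $A\subset S$ has a supremum $\sup_S A$ and an infimum $\inf_S A$ in $S$. A subset $T$ of a poset $S$ is chain-subcomplete upwards (resp. downwards) in $S$ if for every nonempty chain $C\subset T$, $\sup_S C$ (resp. $\inf_S C$) exists and belongs to $T$; it is chain-subcomplete in $S$ if it is both. For a lattice $S$ and a correspondence $F:S\to 2^S$: $F$ is lower V-ascending if for all $x<x'$ in $S$ (strict inequality), every $y\in F(x)$ and every $y'\in F(x')$, one has $y\wedge y'\in F(x)$; $F$ is upper V-ascending if under the same conditions $y\vee y'\in F(x')$; $F$ is V-ascending if it is both upper and lower V-ascending. *)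

theory Defs
  imports Main
begin

text \<open>The ambient nonempty complete lattice S is modelled as a type of class
complete_lattice (S = UNIV). Correspondences F : S -> 2^S are functions 'a => 'a set.\<close>

definition lower_V_ascending :: "('a::lattice \<Rightarrow> 'a set) \<Rightarrow> bool" where
  "lower_V_ascending F \<longleftrightarrow>
     (\<forall>x x'. x < x' \<longrightarrow> (\<forall>y\<in>F x. \<forall>y'\<in>F x'. inf y y' \<in> F x))"

definition upper_V_ascending :: "('a::lattice \<Rightarrow> 'a set) \<Rightarrow> bool" where
  "upper_V_ascending F \<longleftrightarrow>
     (\<forall>x x'. x < x' \<longrightarrow> (\<forall>y\<in>F x. \<forall>y'\<in>F x'. sup y y' \<in> F x'))"

definition V_ascending :: "('a::lattice \<Rightarrow> 'a set) \<Rightarrow> bool" where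
  "V_ascending F \<longleftrightarrow> upper_V_ascending F \<and> lower_V_ascending F"

definition chain_subcomplete_up :: "'a::complete_lattice set \<Rightarrow> bool" where
  "chain_subcomplete_up T \<longleftrightarrow>
     (\<forall>C. C \<noteq> {} \<and> C \<subseteq> T \<and> Complete_Partial_Order.chain (\<le>) C \<longrightarrow> Sup C \<in> T)"

definition chain_subcomplete_down :: "'a::complete_lattice set \<Rightarrow> bool" where
  "chain_subcomplete_down T \<longleftrightarrow>
     (\<forall>C. C \<noteq> {} \<and> C \<subseteq> T \<and> Complete_Partial_Order.chain (\<le>) C \<longrightarrow> Inf C \<in> T)"

definition chain_subcomplete :: "'a::complete_lattice set \<Rightarrow> bool" where
  "chain_subcomplete T \<longleftrightarrow> chain_subcomplete_up T \<and> chain_subcomplete_down T"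

definition Fix :: "('a \<Rightarrow> 'a set) \<Rightarrow> 'a set" where
  "Fix F = {s. s \<in> F s}"

definition is_sup_in :: "'a::order set \<Rightarrow> 'a set \<Rightarrow> 'a \<Rightarrow> bool" where
  "is_sup_in T A s \<longleftrightarrow> s \<in> T \<and> (\<forall>a\<in>A. a \<le> s) \<and> (\<forall>t\<in>T. (\<forall>a\<in>A. a \<le> t) \<longrightarrow> s \<le> t)"

definition is_inf_in :: "'a::order set \<Rightarrow> 'a set \<Rightarrow> 'a \<Rightarrow> bool" where
  "is_inf_in T A s \<longleftrightarrow> s \<in> T \<and> (\<forall>a\<in>A. s \<le> a) \<and> (\<forall>t\<in>T. (\<forall>a\<in>A. t \<le> a) \<longrightarrow> t \<le> s)"

definition complete_lattice_in :: "'a::order set \<Rightarrow> bool" where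
  "complete_lattice_in T \<longleftrightarrow>
     (\<forall>A. A \<noteq> {} \<and> A \<subseteq> T \<longrightarrow> (\<exists>s. is_sup_in T A s) \<and> (\<exists>i. is_inf_in T A i))"

end

theory Submission imports Defs begin

lemma zorn_max:
  fixes X :: "'a::complete_lattice set"
  assumes ne: "X \<noteq> {}"
    and ch: "\<And>C. C \<noteq> {} \<Longrightarrow> C \<subseteq> X \<Longrightarrow> Complete_Partial_Order.chain (\<le>) C \<Longrightarrow> Sup C \<in> X"
  shows "\<exists>m\<in>X. \<forall>a\<in>X. m \<le> a \<longrightarrow> a = m"
proof (rule predicate_Zorn)
  show "partial_order_on X (relation_of (\<le>) X)"
    by (rule partial_order_on_relation_ofI) auto
next
  fix C assume C: "C \<in> Chains (relation_of (\<le>) X)"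
  show "\<exists>u\<in>X. \<forall>a\<in>C. a \<le> u"
  proof (cases "C = {}")
    case True then show ?thesis using ne by auto
  next
    case False
    have sub: "C \<subseteq> X" using C unfolding Chains_def relation_of_def by auto
    have "Complete_Partial_Order.chain (\<le>) C"
      using C unfolding Chains_def relation_of_def Complete_Partial_Order.chain_def by auto
    then have "Sup C \<in> X" using ch False sub by auto
    then show ?thesis by (auto intro: Sup_upper)
  qed
qed

lemma zorn_min:
  fixes X :: "'a::complete_lattice set"
  assumes ne: "X \<noteq> {}"
    and ch: "\<And>C. C \<noteq> {} \<Longrightarrow> C \<subseteq> X \<Longrightarrow> Complete_Partial_Order.chain (\<le>) C \<Longrightarrow> Inf C \<in> X"
  shows "\<exists>m\<in>X. \<forall>a\<in>X. a \<le> m \<longrightarrow> a = m"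
proof (rule predicate_Zorn[where P="\<lambda>x y. y \<le> x"])
  show "partial_order_on X (relation_of (\<lambda>x y. y \<le> x) X)"
    by (rule partial_order_on_relation_ofI) auto
next
  fix C assume C: "C \<in> Chains (relation_of (\<lambda>x y. y \<le> x) X)"
  show "\<exists>u\<in>X. \<forall>a\<in>C. u \<le> a"
  proof (cases "C = {}")
    case True then show ?thesis using ne by auto
  next
    case False
    have sub: "C \<subseteq> X" using C unfolding Chains_def relation_of_def by auto
    have "Complete_Partial_Order.chain (\<le>) C"
      using C unfolding Chains_def relation_of_def Complete_Partial_Order.chain_def by auto
    then have "Inf C \<in> X" using ch False sub by auto
    then show ?thesis by (auto intro: Inf_lower)
  qed
qed

lemma exist_fix:
  fixes F :: "'a::complete_lattice \<Rightarrow> 'a set"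
  assumes uV: "upper_V_ascending F"
    and csu: "\<And>x. chain_subcomplete_up (F x)"
    and lu: "l \<le> u"
    and hyp: "\<And>x. l \<le> x \<Longrightarrow> x \<le> u \<Longrightarrow> \<exists>y\<in>F x. l \<le> y \<and> y \<le> u"
  shows "\<exists>p. l \<le> p \<and> p \<le> u \<and> p \<in> F p"
proof -
  define D where "D = {x. l \<le> x \<and> x \<le> u \<and> (\<exists>y\<in>F x. l \<le> y \<and> y \<le> u \<and> x \<le> y)}"
  have lD: "l \<in> D" using hyp[OF order_refl lu] unfolding D_def using lu by auto
  have "\<exists>m\<in>D. \<forall>a\<in>D. m \<le> a \<longrightarrow> a = m"
  proof (rule zorn_max)
    show "D \<noteq> {}" using lD by auto
  next
    fix C assume Cne: "C \<noteq> {}" and CD: "C \<subseteq> D" and Cch: "Complete_Partial_Order.chain (\<le>) C"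
    define c where "c = Sup C"
    obtain x0 where x0: "x0 \<in> C" using Cne by auto
    have "l \<le> x0" using x0 CD D_def by auto
    also have "x0 \<le> Sup C" using x0 by (rule Sup_upper)
    finally have lc: "l \<le> c" unfolding c_def .
    have cu: "c \<le> u" unfolding c_def using CD D_def by (auto intro!: Sup_least)
    show "Sup C \<in> D"
    proof (cases "c \<in> C")
      case True then show ?thesis using CD c_def by auto
    next
      case False
      have lt: "x < c" if "x \<in> C" for x
        using that False c_def by (metis Sup_upper order.not_eq_order_implies_strict)
      obtain z0 where z0: "z0 \<in> F c" "l \<le> z0" "z0 \<le> u" using hyp[OF lc cu] by auto
      define Y where "Y = {w \<in> F c. z0 \<le> w \<and> w \<le> u}"
      have "\<exists>m\<in>Y. \<forall>a\<in>Y. m \<le> a \<longrightarrow> a = m"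
      proof (rule zorn_max)
        show "Y \<noteq> {}" using z0 Y_def by auto
      next
        fix C' assume ne': "C' \<noteq> {}" and sub': "C' \<subseteq> Y" and ch': "Complete_Partial_Order.chain (\<le>) C'"
        have "Sup C' \<in> F c" using csu[of c] ne' sub' ch' unfolding chain_subcomplete_up_def Y_def by auto
        moreover obtain w where "w \<in> C'" using ne' by auto
        then have "z0 \<le> w" "w \<le> Sup C'" using sub' Y_def by (auto intro: Sup_upper)
        then have "z0 \<le> Sup C'" by (rule order_trans)
        moreover have "Sup C' \<le> u" using sub' Y_def by (auto intro!: Sup_least)
        ultimately show "Sup C' \<in> Y" unfolding Y_def by auto
      qed
      then obtain m where mY: "m \<in> Y" and mmax: "\<forall>a\<in>Y. m \<le> a \<longrightarrow> a = m" by blast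
      have "x \<le> m" if xC: "x \<in> C" for x
      proof -
        obtain y where y: "y \<in> F x" "l \<le> y" "y \<le> u" "x \<le> y" using xC CD D_def by auto
        have "sup y m \<in> F c" using uV lt[OF xC] y(1) mY Y_def unfolding upper_V_ascending_def by auto
        then have "sup y m \<in> Y" using mY y Y_def by (auto intro: le_supI2)
        then have "sup y m = m" using mmax by auto
        then have "y \<le> m" by (metis sup.cobounded1)
        then show ?thesis using y(4) by (rule order_trans[rotated])
      qed
      then have "c \<le> m" unfolding c_def by (auto intro!: Sup_least)
      then show ?thesis using mY Y_def z0 lc cu c_def unfolding D_def by auto
    qed
  qed
  then obtain xs where xsD: "xs \<in> D" and xmax: "\<forall>a\<in>D. xs \<le> a \<longrightarrow> a = xs" by blast
  obtain y where y: "y \<in> F xs" "l \<le> y" "y \<le> u" "xs \<le> y" using xsD D_def by auto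
  have "y = xs"
  proof (rule ccontr)
    assume "y \<noteq> xs"
    then have lt: "xs < y" using y(4) by auto
    obtain z where z: "z \<in> F y" "l \<le> z" "z \<le> u" using hyp[OF y(2) y(3)] by auto
    have "sup y z \<in> F y" using uV lt y(1) z(1) unfolding upper_V_ascending_def by auto
    moreover have "l \<le> sup y z" using y(2) by (rule le_supI1)
    moreover have "sup y z \<le> u" using y(3) z(3) by (rule sup_least)
    moreover have "y \<le> sup y z" by (rule sup_ge1)
    ultimately have "y \<in> D" using y unfolding D_def by blast
    then show False using xmax y(4) \<open>y \<noteq> xs\<close> by auto
  qed
  then show ?thesis using y by auto
qed

lemma restrict_ne:
  fixes F :: "'a::complete_lattice \<Rightarrow> 'a set"
  assumes uV: "upper_V_ascending F" and lV: "lower_V_ascending F"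
    and ne: "\<And>x. F x \<noteq> {}"
    and csu: "\<And>x. chain_subcomplete_up (F x)"
    and csd: "\<And>x. chain_subcomplete_down (F x)"
    and A: "A \<subseteq> Fix F" and B: "B \<subseteq> Fix F"
    and ax: "Sup A \<le> x" and xb: "x \<le> Inf B"
  shows "\<exists>y\<in>F x. Sup A \<le> y \<and> y \<le> Inf B"
proof (cases "x \<in> A \<or> x \<in> B")
  case True
  then have "x \<in> F x" using A B by (auto simp: Fix_def)
  moreover have "x = Sup A \<or> x = Inf B"
  proof (cases "x \<in> A")
    case True
    then have "x \<le> Sup A" by (rule Sup_upper)
    then show ?thesis using ax by auto
  next
    case False
    then have "x \<in> B" using \<open>x \<in> A \<or> x \<in> B\<close> by auto
    then have "Inf B \<le> x" by (rule Inf_lower)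
    then show ?thesis using xb by auto
  qed
  ultimately show ?thesis using ax xb by auto
next
  case False
  have ltA: "s < x" if "s \<in> A" for s
  proof -
    have "s \<le> Sup A" using that by (rule Sup_upper)
    then have "s \<le> x" using ax by (rule order.trans)
    moreover have "s \<noteq> x" using that False by auto
    ultimately show ?thesis by auto
  qed
  have ltB: "x < t" if "t \<in> B" for t
  proof -
    have "Inf B \<le> t" using that by (rule Inf_lower)
    then have "x \<le> t" using xb by (rule order.trans[rotated])
    moreover have "t \<noteq> x" using that False by auto
    ultimately show ?thesis by auto
  qed
  obtain z0 where z0: "z0 \<in> F x" using ne by blast
  define Y where "Y = {w \<in> F x. z0 \<le> w}"
  have "\<exists>m\<in>Y. \<forall>a\<in>Y. m \<le> a \<longrightarrow> a = m"
  proof (rule zorn_max)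
    show "Y \<noteq> {}" using z0 Y_def by auto
  next
    fix C' assume ne': "C' \<noteq> {}" and sub': "C' \<subseteq> Y" and ch': "Complete_Partial_Order.chain (\<le>) C'"
    have "Sup C' \<in> F x" using csu[of x] ne' sub' ch' unfolding chain_subcomplete_up_def Y_def by auto
    moreover obtain w where "w \<in> C'" using ne' by auto
    then have "z0 \<le> w" "w \<le> Sup C'" using sub' Y_def by (auto intro: Sup_upper)
    then have "z0 \<le> Sup C'" by (rule order_trans)
    ultimately show "Sup C' \<in> Y" unfolding Y_def by auto
  qed
  then obtain m where mY: "m \<in> Y" and mmax: "\<forall>a\<in>Y. m \<le> a \<longrightarrow> a = m" by blast
  have "s \<le> m" if sA: "s \<in> A" for s
  proof -
    have "s \<in> F s" using sA A by (auto simp: Fix_def)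
    then have "sup s m \<in> F x" using uV ltA[OF sA] mY Y_def unfolding upper_V_ascending_def by auto
    then have "sup s m \<in> Y" using mY Y_def by (auto intro: le_supI2)
    then have "sup s m = m" using mmax by auto
    then show "s \<le> m" by (metis sup.cobounded1)
  qed
  then have am: "Sup A \<le> m" by (auto intro!: Sup_least)
  define Y2 where "Y2 = {w \<in> F x. Sup A \<le> w \<and> w \<le> m}"
  have "\<exists>n\<in>Y2. \<forall>a\<in>Y2. a \<le> n \<longrightarrow> a = n"
  proof (rule zorn_min)
    show "Y2 \<noteq> {}" using mY am Y_def Y2_def by auto
  next
    fix C' assume ne': "C' \<noteq> {}" and sub': "C' \<subseteq> Y2" and ch': "Complete_Partial_Order.chain (\<le>) C'"
    have "Inf C' \<in> F x" using csd[of x] ne' sub' ch' unfolding chain_subcomplete_down_def Y2_def by auto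
    moreover obtain w where "w \<in> C'" using ne' by auto
    then have "Inf C' \<le> w" "w \<le> m" using sub' Y2_def by (auto intro: Inf_lower)
    then have "Inf C' \<le> m" by (rule order_trans)
    moreover have "Sup A \<le> Inf C'" using sub' Y2_def by (auto intro!: Inf_greatest)
    ultimately show "Inf C' \<in> Y2" unfolding Y2_def by auto
  qed
  then obtain n where nY: "n \<in> Y2" and nmin: "\<forall>a\<in>Y2. a \<le> n \<longrightarrow> a = n" by blast
  have "n \<le> t" if tB: "t \<in> B" for t
  proof -
    have "t \<in> F t" using tB B by (auto simp: Fix_def)
    then have i: "inf n t \<in> F x" using lV ltB[OF tB] nY Y2_def unfolding lower_V_ascending_def by auto
    have "Sup A \<le> t" using ax xb Inf_lower[OF tB] by (blast intro: order.trans)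
    then have "Sup A \<le> inf n t" using nY Y2_def by auto
    moreover have "inf n t \<le> m" using nY Y2_def by (auto intro: le_infI1)
    ultimately have "inf n t \<in> Y2" using i Y2_def by auto
    then have "inf n t = n" using nmin by auto
    then show "n \<le> t" by (metis inf.cobounded2)
  qed
  then have "n \<le> Inf B" by (auto intro!: Inf_greatest)
  then show ?thesis using nY Y2_def by auto
qed

lemma fix_between:
  fixes F :: "'a::complete_lattice \<Rightarrow> 'a set"
  assumes uV: "upper_V_ascending F" and lV: "lower_V_ascending F"
    and ne: "\<And>x. F x \<noteq> {}"
    and csu: "\<And>x. chain_subcomplete_up (F x)"
    and csd: "\<And>x. chain_subcomplete_down (F x)"
    and A: "A \<subseteq> Fix F" and B: "B \<subseteq> Fix F"
    and AB: "\<And>s t. s \<in> A \<Longrightarrow> t \<in> B \<Longrightarrow> s \<le> t"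
  shows "\<exists>p\<in>Fix F. Sup A \<le> p \<and> p \<le> Inf B"
proof -
  have lu: "Sup A \<le> Inf B" using AB by (auto intro!: Sup_least Inf_greatest)
  have "\<exists>p. Sup A \<le> p \<and> p \<le> Inf B \<and> p \<in> F p"
    by (rule exist_fix[OF uV csu lu restrict_ne[OF uV lV ne csu csd A B]])
  then show ?thesis unfolding Fix_def by auto
qed

theorem theorem1p2:
  fixes F :: "'a::complete_lattice \<Rightarrow> 'a set"
  assumes "V_ascending F"
    and "\<And>x. F x \<noteq> {}"
    and "\<And>x. chain_subcomplete (F x)"
  shows "Fix F \<noteq> {} \<and> complete_lattice_in (Fix F)"
proof -
  have uV: "upper_V_ascending F" and lV: "lower_V_ascending F" using assms(1) unfolding V_ascending_def by auto
  have csu: "\<And>x. chain_subcomplete_up (F x)" and csd: "\<And>x. chain_subcomplete_down (F x)"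
    using assms(3) unfolding chain_subcomplete_def by auto
  note fb = fix_between[OF uV lV assms(2) csu csd]
  have "\<exists>p\<in>Fix F. Sup {} \<le> p \<and> p \<le> Inf {}" by (rule fb) simp_all
  then have "Fix F \<noteq> {}" by auto
  moreover have "complete_lattice_in (Fix F)"
    unfolding complete_lattice_in_def
  proof (intro allI impI conjI)
    fix A assume A: "A \<noteq> {} \<and> A \<subseteq> Fix F"
    define UB where "UB = {t \<in> Fix F. \<forall>a\<in>A. a \<le> t}"
    have s1: "A \<subseteq> Fix F" using A by simp
    have s2: "UB \<subseteq> Fix F" unfolding UB_def by blast
    have s3: "\<And>s t. s \<in> A \<Longrightarrow> t \<in> UB \<Longrightarrow> s \<le> t" unfolding UB_def by blast
    obtain p where p: "p \<in> Fix F" "Sup A \<le> p" "p \<le> Inf UB"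
      using fb[OF s1 s2 s3] by blast
    have "is_sup_in (Fix F) A p" unfolding is_sup_in_def
    proof (intro conjI ballI impI)
      show "p \<in> Fix F" by fact
    next
      fix a assume "a \<in> A" then show "a \<le> p" using p(2) by (blast intro: order.trans Sup_upper)
    next
      fix t assume "t \<in> Fix F" "\<forall>a\<in>A. a \<le> t"
      then have "t \<in> UB" unfolding UB_def by blast
      then show "p \<le> t" using p(3) by (blast intro: order.trans Inf_lower)
    qed
    then show "\<exists>s. is_sup_in (Fix F) A s" by blast
  next
    fix A assume A: "A \<noteq> {} \<and> A \<subseteq> Fix F"
    define LB where "LB = {t \<in> Fix F. \<forall>a\<in>A. t \<le> a}"
    have s1: "A \<subseteq> Fix F" using A by simp
    have s2: "LB \<subseteq> Fix F" unfolding LB_def by blast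
    have s3: "\<And>s t. s \<in> LB \<Longrightarrow> t \<in> A \<Longrightarrow> s \<le> t" unfolding LB_def by blast
    obtain p where p: "p \<in> Fix F" "Sup LB \<le> p" "p \<le> Inf A"
      using fb[OF s2 s1 s3] by blast
    have "is_inf_in (Fix F) A p" unfolding is_inf_in_def
    proof (intro conjI ballI impI)
      show "p \<in> Fix F" by fact
    next
      fix a assume "a \<in> A" then show "p \<le> a" using p(3) by (blast intro: order.trans Inf_lower)
    next
      fix t assume "t \<in> Fix F" "\<forall>a\<in>A. t \<le> a"
      then have "t \<in> LB" unfolding LB_def by blast
      then show "t \<le> p" using p(2) by (blast intro: order.trans Sup_upper)
    qed
    then show "\<exists>i. is_inf_in (Fix F) A i" by blast
  qed
  ultimately show ?thesis by blast
qed

end
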